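(* Let $\epsilon>0$, $R\ge 0$, and let $h:(0,\infty)\to(0,\infty)$, $h(t)=\sinh^{-1}\!\left(\frac{1}{\sinh t}\right)$. Let $[xyvw]$ be a quadrilateral in $\mathbb{H}^n$ (consisting of the geodesic segments $[xy],[yv],[vw],[wx]$) with angles $\angle wxy=\frac{\pi}{2}$, $\angle xyv=\frac{\pi}{2}$ and $\angle xwv\ge\frac{\pi}{2}$. Suppose $d(x,w)\le \frac R2$, $d(y,v)\le\frac R2$ and $d(v,w)\ge h^{-1}(\frac{\epsilon}{2})+R$. Then $d(x,w)\le\frac{\epsilon}{2}$.
   Context: $\mathbb{H}^n$ is real hyperbolic $n$-space with metric $d$; the quadrilateral need not be planar. The function $h$ is a decreasing bijection of $(0,\infty)$. *)

theory Defs
  imports "HOL-Analysis.Analysis"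
begin

text \<open>Hyperboloid model of real hyperbolic n-space, n = CARD('n):
  points (t,u) in R x R^n with Minkowski form u.u - t^2 = -1 and t > 0.\<close>

definition mink :: "real \<times> (real^'n) \<Rightarrow> real \<times> (real^'n) \<Rightarrow> real" where
  "mink p q = snd p \<bullet> snd q - fst p * fst q"

definition hyp_space :: "(real \<times> (real^'n)) set" where
  "hyp_space = {p. mink p p = -1 \<and> fst p > 0}"

definition hdist :: "real \<times> (real^'n) \<Rightarrow> real \<times> (real^'n) \<Rightarrow> real" where
  "hdist p q = arcosh (- mink p q)"

text \<open>Initial tangent vector at x of the geodesic from x to y.\<close>
definition htang :: "real \<times> (real^'n) \<Rightarrow> real \<times> (real^'n) \<Rightarrow> real \<times> (real^'n)" where
  "htang x y = y + mink x y *\<^sub>R x"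

text \<open>hangle a x b is the angle \<angle>axb at vertex x between geodesics [x a] and [x b].\<close>
definition hangle :: "real \<times> (real^'n) \<Rightarrow> real \<times> (real^'n) \<Rightarrow> real \<times> (real^'n) \<Rightarrow> real" where
  "hangle a x b = arccos (mink (htang x a) (htang x b) /
      (sqrt (mink (htang x a) (htang x a)) * sqrt (mink (htang x b) (htang x b))))"

definition hfun :: "real \<Rightarrow> real" where
  "hfun t = arsinh (1 / sinh t)"

definition hfun_inv :: "real \<Rightarrow> real" where
  "hfun_inv = the_inv_into {0<..} hfun"

end

theory Submission
  imports Defs
begin

lemma mink_comm: "mink p q = mink q p"
  by (simp add: mink_def inner_commute mult.commute)

lemma mink_add_left: "mink (p + q) r = mink p r + mink q r"
  by (simp add: mink_def inner_add_left algebra_simps)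

lemma mink_add_right: "mink r (p + q) = mink r p + mink r q"
  by (simp add: mink_def inner_add_right algebra_simps)

lemma mink_diff_left: "mink (p - q) r = mink p r - mink q r"
  by (simp add: mink_def inner_diff_left algebra_simps)

lemma mink_diff_right: "mink r (p - q) = mink r p - mink r q"
  by (simp add: mink_def inner_diff_right algebra_simps)

lemma mink_scale_left: "mink (c *\<^sub>R p) r = c * mink p r"
  by (simp add: mink_def algebra_simps)

lemma mink_scale_right: "mink r (c *\<^sub>R p) = c * mink r p"
  by (simp add: mink_def algebra_simps)

lemmas mink_simps = mink_add_left mink_add_right mink_diff_left mink_diff_right
  mink_scale_left mink_scale_right

lemma hyp_self: "p \<in> hyp_space \<Longrightarrow> mink p p = -1"
  by (simp add: hyp_space_def)

lemma tangent_nonneg: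
  assumes p: "p \<in> hyp_space" and T: "mink T p = 0"
  shows "mink T T \<ge> 0" and "mink T T = 0 \<Longrightarrow> T = 0"
proof -
  obtain t u where pe: "p = (t,u)" by (cases p)
  obtain s z where Te: "T = (s,z)" by (cases T)
  have t: "t > 0" and uu: "u \<bullet> u = t*t - 1" using p by (auto simp: hyp_space_def mink_def pe)
  have zu: "z \<bullet> u = s * t" using T by (simp add: mink_def pe Te)
  have cs: "(z \<bullet> u)^2 \<le> (z \<bullet> z) * (u \<bullet> u)"
    by (metis Cauchy_Schwarz_ineq)
  have zz: "z \<bullet> z \<ge> 0" by simp
  have key: "t*t * ((z \<bullet> z) - s * s) \<ge> (z \<bullet> z)"
    using cs zu uu by (simp add: power2_eq_square algebra_simps)
  have "t*t*((z \<bullet> z) - s * s) \<ge> 0" using key zz by linarith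
  then have "z \<bullet> z - s * s \<ge> 0" using t by (simp add: zero_le_mult_iff) (smt (verit) mult_pos_pos)
  then show "mink T T \<ge> 0" by (simp add: mink_def Te)
  assume "mink T T = 0"
  then have e0: "(z \<bullet> z) - s * s = 0" by (simp add: mink_def Te)
  have "z \<bullet> z = 0" using key zz by (simp only: e0)
  then have "z = 0" by simp
  then have "s = 0" using zu t by simp
  then show "T = 0" using \<open>z = 0\<close> Te by (simp add: zero_prod_def)
qed

lemma mink_cs:
  assumes p: "p \<in> hyp_space" and P: "mink P p = 0" and Q: "mink Q p = 0"
  shows "(mink P Q)^2 \<le> mink P P * mink Q Q"
proof -
  have f: "mink P P + 2*l*mink P Q + l*l*mink Q Q \<ge> 0" for l
  proof -
    have "mink (P + l *\<^sub>R Q) p = 0" using P Q by (simp add: mink_simps)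
    from tangent_nonneg(1)[OF p this]
    show ?thesis by (simp add: mink_simps mink_comm[of Q P] algebra_simps)
  qed
  show ?thesis
  proof (cases "mink Q Q = 0")
    case True
    have "mink P Q = 0"
    proof (rule ccontr)
      assume ne: "mink P Q \<noteq> 0"
      define l where "l = - (mink P P + 1) / (2 * mink P Q)"
      have "2*l*mink P Q = - (mink P P + 1)" using ne by (simp add: l_def)
      with f[of l] True show False by simp
    qed
    then show ?thesis using True by simp
  next
    case False
    have qq: "mink Q Q > 0" using False tangent_nonneg(1)[OF p Q] by simp
    define l where "l = - mink P Q / mink Q Q"
    have "mink P P + 2*l*mink P Q + l*l*mink Q Q = mink P P - (mink P Q)^2 / mink Q Q"
      using qq by (simp add: l_def field_simps power2_eq_square)
    with f[of l] have "(mink P Q)^2 / mink Q Q \<le> mink P P" by simp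
    then show ?thesis using qq by (simp add: divide_le_eq mult.commute)
  qed
qed


lemma mink_neg:
  assumes p: "p \<in> hyp_space" and q: "q \<in> hyp_space"
  shows "mink p q < 0"
proof -
  obtain t u where pe: "p = (t,u)" by (cases p)
  obtain s z where qe: "q = (s,z)" by (cases q)
  have t: "t > 0" and uu: "u \<bullet> u = t*t - 1" using p by (auto simp: hyp_space_def mink_def pe)
  have s: "s > 0" and zz: "z \<bullet> z = s * s - 1" using q by (auto simp: hyp_space_def mink_def qe)
  have cs: "(u \<bullet> z)^2 \<le> (u \<bullet> u) * (z \<bullet> z)" by (rule Cauchy_Schwarz_ineq)
  have t1: "t*t \<ge> 1" using uu inner_ge_zero[of u] by linarith
  have s1: "s * s \<ge> 1" using zz inner_ge_zero[of z] by linarith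
  have e: "(u \<bullet> u) * (z \<bullet> z) = (t * s)^2 - (t*t + s * s - 1)"
    unfolding uu zz by (simp add: power2_eq_square algebra_simps)
  then have "(u \<bullet> u) * (z \<bullet> z) < (t * s)^2" using t1 s1 by linarith
  with cs have "(u \<bullet> z)^2 < (t * s)^2" by linarith
  then have "u \<bullet> z < t * s" by (rule power2_less_imp_less) (use t s in simp)
  moreover have "mink p q = u \<bullet> z - t * s" by (simp add: mink_def pe qe)
  ultimately show ?thesis by linarith
qed

lemma htang_orth: "p \<in> hyp_space \<Longrightarrow> mink (htang p a) p = 0"
  by (simp add: htang_def mink_simps hyp_self mink_comm[of a p])

lemma htang_mink: "p \<in> hyp_space \<Longrightarrow>
   mink (htang p a) (htang p b) = mink a b + mink p a * mink p b"
  by (simp add: htang_def mink_simps hyp_self mink_comm[of a p] mink_comm[of b p] algebra_simps)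

lemma mink_le:
  assumes p: "p \<in> hyp_space" and q: "q \<in> hyp_space"
  shows "- mink p q \<ge> 1" and "- mink p q = 1 \<Longrightarrow> p = q"
proof -
  have n: "mink p q < 0" using mink_neg[OF p q] .
  have tt: "mink (htang p q) (htang p q) = (mink p q)^2 - 1"
    using htang_mink[OF p, of q q] q by (simp add: hyp_self power2_eq_square)
  have "(mink p q)^2 \<ge> 1" using tangent_nonneg(1)[OF p htang_orth[OF p, of q]] tt by simp
  then have "1 \<le> \<bar>mink p q\<bar>" using abs_le_square_iff[of 1 "mink p q"] by simp
  then show "- mink p q \<ge> 1" using n by linarith
  assume e: "- mink p q = 1"
  then have "mink (htang p q) (htang p q) = 0" using tt by (simp add: power2_eq_square)
  then have "htang p q = 0" using tangent_nonneg(2)[OF p htang_orth[OF p]] by simp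
  then show "p = q" using e by (simp add: htang_def)
qed

lemma cosh_hdist: "p \<in> hyp_space \<Longrightarrow> q \<in> hyp_space \<Longrightarrow> cosh (hdist p q) = - mink p q"
  using mink_le(1)[of p q] by (simp add: hdist_def)

lemma hdist_nonneg: "p \<in> hyp_space \<Longrightarrow> q \<in> hyp_space \<Longrightarrow> hdist p q \<ge> 0"
  using mink_le(1)[of p q] by (simp add: hdist_def)

lemma tang_pos:
  assumes p: "p \<in> hyp_space" and q: "q \<in> hyp_space" and ne: "p \<noteq> q"
  shows "mink (htang p q) (htang p q) > 0"
proof -
  have tt: "mink (htang p q) (htang p q) = (mink p q)^2 - 1"
    using htang_mink[OF p, of q q] q by (simp add: hyp_self power2_eq_square)
  have "- mink p q \<noteq> 1" using mink_le(2)[OF p q] ne by auto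
  then have g1: "- mink p q > 1" using mink_le(1)[OF p q] by linarith
  have "1 < (- mink p q) * (- mink p q)" using less_1_mult[OF g1 g1] .
  then have "(mink p q)^2 > 1" by (simp add: power2_eq_square)
  then show ?thesis using tt by simp
qed

lemma hangle_cos:
  assumes p: "p \<in> hyp_space" and a: "a \<in> hyp_space" and b: "b \<in> hyp_space"
    and na: "a \<noteq> p" and nb: "b \<noteq> p"
  shows "cos (hangle a p b) * (sqrt (mink (htang p a) (htang p a)) * sqrt (mink (htang p b) (htang p b)))
           = mink (htang p a) (htang p b)"
    and "0 \<le> hangle a p b" and "hangle a p b \<le> pi"
proof -
  let ?A = "mink (htang p a) (htang p a)" and ?B = "mink (htang p b) (htang p b)"
    and ?C = "mink (htang p a) (htang p b)"
  have A: "?A > 0" using tang_pos[OF p a] na by auto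
  have B: "?B > 0" using tang_pos[OF p b] nb by auto
  have cs: "?C^2 \<le> ?A * ?B" using mink_cs[OF p htang_orth[OF p] htang_orth[OF p]] .
  have d: "sqrt ?A * sqrt ?B > 0" using A B by simp
  have "\<bar>?C\<bar> \<le> sqrt ?A * sqrt ?B"
    using cs A B by (metis real_sqrt_abs real_sqrt_le_mono real_sqrt_mult)
  then have z1: "-1 \<le> ?C / (sqrt ?A * sqrt ?B)" and z2: "?C / (sqrt ?A * sqrt ?B) \<le> 1"
    using d by (auto simp: divide_le_eq le_divide_eq abs_le_iff)
  have cc: "cos (hangle a p b) = ?C / (sqrt ?A * sqrt ?B)"
    unfolding hangle_def using z1 z2 by (rule cos_arccos)
  have dn: "sqrt ?A * sqrt ?B \<noteq> 0" using d by linarith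
  show "cos (hangle a p b) * (sqrt ?A * sqrt ?B) = ?C"
    using nonzero_eq_divide_eq[OF dn] cc by blast
  show "0 \<le> hangle a p b" using z1 z2 by (simp add: hangle_def arccos_lbound)
  show "hangle a p b \<le> pi" using z1 z2 by (simp add: hangle_def arccos_ubound)
qed

lemma hangle_right:
  assumes p: "p \<in> hyp_space" and a: "a \<in> hyp_space" and b: "b \<in> hyp_space"
    and na: "a \<noteq> p" and nb: "b \<noteq> p" and r: "hangle a p b = pi/2"
  shows "mink a b + mink p a * mink p b = 0"
  using hangle_cos(1)[OF p a b na nb] r htang_mink[OF p] by simp

lemma hangle_obtuse:
  assumes p: "p \<in> hyp_space" and a: "a \<in> hyp_space" and b: "b \<in> hyp_space"
    and na: "a \<noteq> p" and nb: "b \<noteq> p" and r: "hangle a p b \<ge> pi/2"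
  shows "mink a b + mink p a * mink p b \<le> 0"
proof -
  have "cos (hangle a p b) \<le> cos (pi/2)"
    using cos_mono_le_eq[of "hangle a p b" "pi/2"] hangle_cos(2,3)[OF p a b na nb] r by simp
  then have c: "cos (hangle a p b) \<le> 0" by simp
  have "0 \<le> sqrt (mink (htang p a) (htang p a)) * sqrt (mink (htang p b) (htang p b))"
    using tang_pos[OF p a] tang_pos[OF p b] na nb by auto
  then have "cos (hangle a p b) * (sqrt (mink (htang p a) (htang p a)) * sqrt (mink (htang p b) (htang p b))) \<le> 0"
    using c by (simp add: mult_nonpos_nonneg)
  then show ?thesis using hangle_cos(1)[OF p a b na nb] htang_mink[OF p] by simp
qed


lemma hfun_hfun: "t > 0 \<Longrightarrow> hfun (hfun t) = t"
  by (simp add: hfun_def arsinh_sinh_real)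

lemma hfun_pos: "t > 0 \<Longrightarrow> hfun t > 0"
  by (simp add: hfun_def)

lemma hfun_inv_eq: "t > 0 \<Longrightarrow> hfun_inv t = hfun t"
proof -
  assume t: "t > 0"
  have inj: "inj_on hfun {0<..}"
    by (rule inj_onI) (metis greaterThan_iff hfun_hfun)
  show ?thesis unfolding hfun_inv_def
    by (rule the_inv_into_f_eq[OF inj]) (use t hfun_hfun hfun_pos in auto)
qed

lemma key_arith:
  fixes A C Lc Dc sa sc sL :: real
  assumes A: "A \<ge> 1" and C: "C \<ge> 1" and Lc: "Lc \<ge> 1" and Dc: "Dc \<ge> 1"
    and sa: "sa \<ge> 0" and sc: "sc \<ge> 0" and sL: "sL \<ge> 0"
    and sa2: "sa^2 = A^2 - 1" and sc2: "sc^2 = C^2 - 1" and sL2: "sL^2 = Lc^2 - 1"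
    and cs: "(A*C*Lc - Dc)^2 \<le> (sc* sa)^2" and ob: "A * Dc \<le> Lc * C"
  shows "sa * sL \<le> 1"
proof (cases "sa = 0")
  case True then show ?thesis by simp
next
  case False
  then have sap: "sa > 0" using sa by simp
  have i1: "A*C*Lc - Dc \<le> sc* sa" using cs by (rule power2_le_imp_le) (use sa sc in simp)
  have "A*(A*C*Lc - Dc) \<le> A*(sc* sa)" using i1 A by (intro mult_left_mono) auto
  then have "Lc*C*(A*A - 1) \<le> A* sc* sa" using ob by (simp add: algebra_simps)
  moreover have "A*A - 1 = sa* sa" using sa2 by (simp add: power2_eq_square)
  ultimately have "(Lc*C* sa)* sa \<le> (A* sc)* sa" by (simp add: algebra_simps)
  then have i2: "Lc*C* sa \<le> A* sc" using sap by simp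
  have "sc^2 \<le> C^2" using sc2 by simp
  then have "sc \<le> C" by (rule power2_le_imp_le) (use C in simp)
  then have "A* sc \<le> A*C" using A by (intro mult_left_mono) auto
  with i2 have "C*(Lc* sa) \<le> C*A" by (simp add: algebra_simps)
  then have i3: "Lc* sa \<le> A" using C by simp
  have "(Lc* sa)^2 \<le> A^2" using i3 Lc sa by (intro power_mono) auto
  then have "(sL^2 + 1) * sa^2 \<le> sa^2 + 1" using sa2 sL2 by (simp add: power_mult_distrib)
  then have "(sa* sL)^2 \<le> 1^2" by (simp add: power_mult_distrib algebra_simps)
  then show ?thesis by (rule power2_le_imp_le) simp
qed


theorem mainTheorem5:
  fixes x y v w :: "real \<times> (real^'n)" and \<epsilon> R :: real
  assumes "\<epsilon> > 0" and "R \<ge> 0"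
    and "x \<in> hyp_space" and "y \<in> hyp_space" and "v \<in> hyp_space" and "w \<in> hyp_space"
    and "x \<noteq> y" and "y \<noteq> v" and "v \<noteq> w" and "w \<noteq> x"
    and "hangle w x y = pi / 2" and "hangle x y v = pi / 2" and "hangle x w v \<ge> pi / 2"
    and "hdist x w \<le> R / 2" and "hdist y v \<le> R / 2"
    and "hdist v w \<ge> hfun_inv (\<epsilon> / 2) + R"
  shows "hdist x w \<le> \<epsilon> / 2"
proof -
  note hx = assms(3) and hy = assms(4) and hv = assms(5) and hw = assms(6)
  have r1: "mink w y + mink x w * mink x y = 0"
    by (rule hangle_right[OF hx hw hy]) (use assms in auto)
  have r2: "mink x v + mink y x * mink y v = 0"
    by (rule hangle_right[OF hy hx hv]) (use assms in auto)
  have r3: "mink x v + mink w x * mink w v \<le> 0"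
    by (rule hangle_obtuse[OF hw hx hv]) (use assms in auto)
  define a where "a = hdist x w"
  define c where "c = hdist y v"
  define L where "L = hdist x y"
  define D where "D = hdist v w"
  have ca: "cosh a = - mink x w" unfolding a_def by (rule cosh_hdist[OF hx hw])
  have cc: "cosh c = - mink y v" unfolding c_def by (rule cosh_hdist[OF hy hv])
  have cL: "cosh L = - mink x y" unfolding L_def by (rule cosh_hdist[OF hx hy])
  have cD: "cosh D = - mink v w" unfolding D_def by (rule cosh_hdist[OF hv hw])
  have a0: "a \<ge> 0" unfolding a_def by (rule hdist_nonneg[OF hx hw])
  have c0: "c \<ge> 0" unfolding c_def by (rule hdist_nonneg[OF hy hv])
  have L0: "L \<ge> 0" unfolding L_def by (rule hdist_nonneg[OF hx hy])
  have D0: "D \<ge> 0" unfolding D_def by (rule hdist_nonneg[OF hv hw])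
  have e1: "mink w y = - cosh a * cosh L" using r1 ca cL by simp
  have e2: "mink x v = - cosh L * cosh c" using r2 cc cL mink_comm[of y x] by simp
  have ob: "cosh a * cosh D \<le> cosh L * cosh c"
    using r3 e2 ca cD mink_comm[of w x] mink_comm[of w v] by simp
  define P where "P = htang y v"
  define Q where "Q = htang x w"
  have Px: "mink P x = 0"
    using htang_def P_def r2 mink_comm[of v x] mink_comm[of y x]
    by (simp add: P_def htang_def mink_simps hyp_self[OF hy] algebra_simps)
  have Qx: "mink Q x = 0" unfolding Q_def by (rule htang_orth[OF hx])
  have PP: "mink P P = (cosh c)^2 - 1"
    unfolding P_def using htang_mink[OF hy, of v v] hyp_self[OF hv] cc by (simp add: power2_eq_square)
  have QQ: "mink Q Q = (cosh a)^2 - 1"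
    unfolding Q_def using htang_mink[OF hx, of w w] hyp_self[OF hw] ca by (simp add: power2_eq_square)
  have PQ: "mink P Q = cosh a * cosh c * cosh L - cosh D"
  proof -
    have "mink P Q = mink v w + mink x w * mink v x + mink y v * mink y w + mink y v * mink x w * mink y x"
      by (simp add: P_def Q_def htang_def mink_simps algebra_simps)
    also have "\<dots> = cosh a * cosh c * cosh L - cosh D"
      using e1 e2 ca cc cL cD mink_comm[of v x] mink_comm[of y w] mink_comm[of y x] mink_comm[of v w]
      by (simp add: algebra_simps)
    finally show ?thesis .
  qed
  have cs: "(mink P Q)^2 \<le> mink P P * mink Q Q" by (rule mink_cs[OF hx Px Qx])
  have sa2: "(sinh a)^2 = (cosh a)^2 - 1" and sc2: "(sinh c)^2 = (cosh c)^2 - 1"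
    and sL2: "(sinh L)^2 = (cosh L)^2 - 1" by (simp_all add: cosh_square_eq)
  have cs': "(cosh a * cosh c * cosh L - cosh D)^2 \<le> (sinh c * sinh a)^2"
    using cs PQ PP QQ sa2 sc2 by (simp add: power_mult_distrib)
  have prod: "sinh a * sinh L \<le> 1"
    by (rule key_arith[OF cosh_real_ge_1 cosh_real_ge_1 cosh_real_ge_1 cosh_real_ge_1 _ _ _ sa2 sc2 sL2 cs' ob])
      (use a0 c0 L0 in auto)
  define b where "b = hfun (\<epsilon>/2)"
  have b0: "b > 0" unfolding b_def using assms(1) by (intro hfun_pos) simp
  have sb: "sinh b = 1 / sinh (\<epsilon>/2)" unfolding b_def hfun_def by simp
  have Db: "D \<ge> b + R" using assms(16) hfun_inv_eq[of "\<epsilon>/2"] assms(1) by (simp add: D_def b_def)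
  have "cosh D \<le> cosh D * cosh a" using cosh_real_ge_1[of a] by simp
  also have "\<dots> \<le> cosh L * cosh c" using ob by (simp add: mult.commute)
  also have "\<dots> \<le> cosh (L + c)"
    using L0 c0 by (simp add: cosh_add)
  finally have "D \<le> L + c" using cosh_real_nonneg_le_iff D0 L0 c0 by simp
  moreover have "c \<le> R/2" using assms(15) c_def by simp
  ultimately have Lb: "L \<ge> b" using Db assms(2) by linarith
  have sbp: "sinh b > 0" using b0 by simp
  have "sinh b \<le> sinh L" using Lb by simp
  then have "sinh a * sinh b \<le> 1" using prod a0
    by (meson mult_left_mono order_trans sinh_real_nonneg_iff)
  then have "sinh a \<le> 1 / sinh b" using sbp by (simp add: le_divide_eq)
  also have "\<dots> = sinh (\<epsilon>/2)" using sb by simp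
  finally show ?thesis unfolding a_def[symmetric] by simp
qed

end
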